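(* Let $m_1,m_2\ge 1$ be integers and let $s_1,s_2\in\{+1,-1\}$. Let $$|\mathscr{G}_1\rangle=\tfrac{1}{\sqrt2}\Big(|0\rangle\textstyle\bigotimes_{k=2}^{2m_1}|i^1_k\rangle+s_1\,|1\rangle\bigotimes_{k=2}^{2m_1}|\bar i^1_k\rangle\Big),\qquad |\mathscr{G}_2\rangle=\tfrac{1}{\sqrt2}\Big(|0\rangle\textstyle\bigotimes_{k=2}^{2m_2}|i^2_k\rangle+s_2\,|1\rangle\bigotimes_{k=2}^{2m_2}|\bar i^2_k\rangle\Big)$$ be a $2m_1$-qubit and a $2m_2$-qubit state, with all $i^h_k\in\{0,1\}$, and consider the product state $|\mathscr{G}_1\rangle\otimes|\mathscr{G}_2\rangle$. Call "part 1" and "part 2" the first $m_1$ and the last $m_1$ qubits of $|\mathscr{G}_1\rangle$, and "part 3" and "part 4" the first $m_2$ and the last $m_2$ qubits of $|\mathscr{G}_2\rangle$. Perform a projective measurement in the GHZ basis (the Bell basis when $m_1=m_2=1$) on the $(m_1+m_2)$-qubit register formed by parts 1 and 3 (ordered: part 1 then part 3), or alternatively on the register formed by parts 1 and 4 (ordered: part 1 then part 4). Let $|\mathcal{G}_a\rangle$ denote the obtained measurement outcome (a GHZ basis state) and $|\mathcal{G}_b\rangle$ the state into which the remaining $m_1+m_2$ qubits (parts 2 and 4 in the first case, ordered part 2 then part 4; parts 2 and 3 in the second case, ordered part 2 then part 3) collapse. Suppose the following two conditions hold: (1) either for both $h=1,2$ the string $0i^h_2i^h_3\cdots i^h_{m_h}$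 equals $i^h_{m_h+1}i^h_{m_h+2}\cdots i^h_{2m_h}$, or for both $h=1,2$ the string $0i^h_2i^h_3\cdots i^h_{m_h}$ equals $\bar i^h_{m_h+1}\bar i^h_{m_h+2}\cdots \bar i^h_{2m_h}$; (2) $s_1=s_2$ (both states carry the same sign in front of their second term). Then $|\mathcal{G}_a\rangle$ and $|\mathcal{G}_b\rangle$ are the same state (for every measurement outcome); otherwise (if the conditions fail) they are different.
   Context: Qubits have computational basis $|0\rangle,|1\rangle$; for a bit $b$, $\bar b=1-b$ denotes its negation. For $N\ge 2$ qubits, the GHZ basis is the orthonormal basis of $N$-qubit states $\frac{1}{\sqrt2}\big(|0\,b_2b_3\cdots b_N\rangle\pm|1\,\bar b_2\bar b_3\cdots\bar b_N\rangle\big)$, $b_2,\dots,b_N\in\{0,1\}$; for $N=2$ these are the four Bell states $\frac1{\sqrt2}(|00\rangle\pm|11\rangle)$, $\frac1{\sqrt2}(|01\rangle\pm|10\rangle)$, and the measurement is then called a Bell measurement. "Same state" means equal as quantum states (up to a global phase). *)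

theory Defs
  imports Complex_Main
begin

text \<open>Qubit states: an N-qubit state is a function from bit strings (bool lists,
  False = 0, True = 1, first list element = first qubit) to complex amplitudes,
  supported on strings of length N.\<close>

type_synonym qstate = "bool list \<Rightarrow> complex"

definition ket :: "bool list \<Rightarrow> qstate" where
  "ket a = (\<lambda>zs. if zs = a then 1 else 0)"

definition tensor :: "nat \<Rightarrow> qstate \<Rightarrow> qstate \<Rightarrow> qstate" where
  "tensor n u v = (\<lambda>zs. u (take n zs) * v (drop n zs))"

definition ghz_state :: "bool list \<Rightarrow> real \<Rightarrow> qstate" where
  "ghz_state a s = (\<lambda>zs. (ket a zs + complex_of_real s * ket (map Not a) zs) / complex_of_real (sqrt 2))"

definition ghz_basis :: "nat \<Rightarrow> qstate set" where
  "ghz_basis N = {ghz_state (False # bs) \<sigma> | bs \<sigma>. length bs = N - 1 \<and> \<sigma> \<in> {1, -1}}"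

definition vnorm :: "nat \<Rightarrow> qstate \<Rightarrow> real" where
  "vnorm n v = sqrt (\<Sum>xs\<in>{xs. length xs = n}. (cmod (v xs))\<^sup>2)"

definition normalize_state :: "nat \<Rightarrow> qstate \<Rightarrow> qstate" where
  "normalize_state n v = (\<lambda>xs. v xs / complex_of_real (vnorm n v))"

definition same_state :: "qstate \<Rightarrow> qstate \<Rightarrow> bool" where
  "same_state u v \<longleftrightarrow> (\<exists>c. cmod c = 1 \<and> (\<forall>xs. u xs = c * v xs))"

text \<open>Partial projection of a total state psi onto the k-qubit register state phi:
  the (unnormalised) post-measurement state of the remaining qubits.
  merge xs ys reassembles the full bit string from the register bits xs
  and the remaining bits ys.\<close>
definition partial_proj ::
  "nat \<Rightarrow> (bool list \<Rightarrow> bool list \<Rightarrow> bool list) \<Rightarrow> qstate \<Rightarrow> qstate \<Rightarrow> qstate" where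
  "partial_proj k merge phi psi =
     (\<lambda>ys. \<Sum>xs\<in>{xs. length xs = k}. cnj (phi xs) * psi (merge xs ys))"

text \<open>Full string = part1 @ part2 @ part3 @ part4 (lengths m1, m1, m2, m2).
  Register (part1, part3), rest (part2, part4):\<close>
definition merge_13 :: "nat \<Rightarrow> bool list \<Rightarrow> bool list \<Rightarrow> bool list" where
  "merge_13 m1 xs ys = take m1 xs @ take m1 ys @ drop m1 xs @ drop m1 ys"

text \<open>Register (part1, part4), rest (part2, part3):\<close>
definition merge_14 :: "nat \<Rightarrow> bool list \<Rightarrow> bool list \<Rightarrow> bool list" where
  "merge_14 m1 xs ys = take m1 xs @ take m1 ys @ drop m1 ys @ drop m1 xs"

end

theory Submission
  imports Defs
begin

abbreviation nt :: "bool list \<Rightarrow> bool list" where "nt \<equiv> map Not"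

lemma NotNot[simp]: "(Not \<circ> Not) = id" by auto
lemma nt_nt[simp]: "nt (nt u) = u" by (induct u) auto
lemma nt_eq[simp]: "(nt u = nt v) = (u = v)" by (metis nt_nt)
lemma nt_swap: "(u = nt v) = (v = nt u)" by auto

lemma ket_app: "length u = length v \<Longrightarrow> ket (u@u') (v@v') = ket u v * ket u' v'"
  by (auto simp: ket_def)
lemma ket_nt[simp]: "ket (nt u) (nt v) = ket u v" by (simp add: ket_def)
lemma ket_self[simp]: "ket u u = 1" by (simp add: ket_def)
lemma ket_hd: "u \<noteq> [] \<Longrightarrow> v \<noteq> [] \<Longrightarrow> hd u \<noteq> hd v \<Longrightarrow> ket u v = 0"
  by (auto simp: ket_def)
lemma ket_nt_self[simp]: "u \<noteq> [] \<Longrightarrow> ket (nt u) u = 0" "u \<noteq> [] \<Longrightarrow> ket u (nt u) = 0"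
  by (cases u; simp add: ket_def)+
lemma ket_len: "length u \<noteq> length v \<Longrightarrow> ket u v = 0" by (auto simp: ket_def)

lemma ghz_app: "length u = length v \<Longrightarrow> ghz_state (u@u') s (v@v') =
   (ket u v * ket u' v' + complex_of_real s * (ket (nt u) v * ket (nt u') v')) / complex_of_real (sqrt 2)"
  by (simp add: ghz_state_def ket_app)

lemma ghz_len: assumes "length zs \<noteq> length d" shows "ghz_state d s zs = 0"
proof -
  have "zs \<noteq> d" "zs \<noteq> nt d" using assms by auto
  then show ?thesis by (simp add: ghz_state_def ket_def)
qed

lemma sq2: "complex_of_real (sqrt 2) * complex_of_real (sqrt 2) = 2"
proof -
  have "complex_of_real (sqrt 2) * complex_of_real (sqrt 2) = complex_of_real (sqrt 2 * sqrt 2)"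
    by (simp only: of_real_mult)
  then show ?thesis by simp
qed
lemma sq2nz[simp]: "complex_of_real (sqrt 2) \<noteq> 0" by simp

lemma ghz_self: "d \<noteq> [] \<Longrightarrow> ghz_state d s d = 1 / complex_of_real (sqrt 2)"
  by (simp add: ghz_state_def)
lemma ghz_ntself: "d \<noteq> [] \<Longrightarrow> ghz_state d s (nt d) = complex_of_real s / complex_of_real (sqrt 2)"
  by (simp add: ghz_state_def)
lemma ghz_other: "xs \<noteq> d \<Longrightarrow> xs \<noteq> nt d \<Longrightarrow> ghz_state d s xs = 0"
  by (auto simp: ghz_state_def ket_def)

lemma same_scale:
  assumes "cmod w = 1" shows "same_state u (\<lambda>ys. w * v ys) = same_state u v"
proof
  assume "same_state u (\<lambda>ys. w * v ys)"
  then obtain c where "cmod c = 1" "\<forall>xs. u xs = c * (w * v xs)" by (auto simp: same_state_def)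
  then show "same_state u v" unfolding same_state_def
    by (intro exI[of _ "c*w"]) (simp add: assms norm_mult)
next
  assume "same_state u v"
  then obtain c where c: "cmod c = 1" "\<forall>xs. u xs = c * v xs" by (auto simp: same_state_def)
  have "w \<noteq> 0" using assms by auto
  then show "same_state u (\<lambda>ys. w * v ys)" unfolding same_state_def using c assms
    by (intro exI[of _ "c/w"]) (simp add: norm_divide)
qed

lemma sign_cases: "(s::real) \<in> {1,-1} \<Longrightarrow> s = 1 \<or> s = -1" by auto

lemma swap_alg: "(s::real) \<in> {1,-1} \<Longrightarrow> ((k1::complex) + complex_of_real s * k2) / r = complex_of_real s * ((k2 + complex_of_real s * k1) / r)"
  by (auto simp: field_simps)

lemma same_ghz:
  assumes "c \<noteq> []" "\<sigma> \<in> {1,-1}" "\<tau> \<in> {1,-1}"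
  shows "same_state (ghz_state c \<sigma>) (ghz_state d \<tau>) = ((d = c \<or> d = nt c) \<and> \<tau> = \<sigma>)"
proof
  assume "same_state (ghz_state c \<sigma>) (ghz_state d \<tau>)"
  then obtain w where w: "cmod w = 1" "\<And>xs. ghz_state c \<sigma> xs = w * ghz_state d \<tau> xs"
    by (auto simp: same_state_def)
  have nz: "ghz_state d \<tau> c \<noteq> 0" using w(2)[of c] ghz_self[OF assms(1)] by auto
  have dne: "d \<noteq> []" using nz ghz_len[of c d] assms(1) by auto
  note nz
  then have "c = d \<or> c = nt d" using ghz_other by blast
  then show "(d = c \<or> d = nt c) \<and> \<tau> = \<sigma>"
  proof
    assume cd: "c = d"
    have 1: "1 / complex_of_real (sqrt 2) = w * (1 / complex_of_real (sqrt 2))"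
      using w(2)[of c] ghz_self[OF assms(1)] cd by simp
    have 2: "complex_of_real \<sigma> / complex_of_real (sqrt 2) = w * (complex_of_real \<tau> / complex_of_real (sqrt 2))"
      using w(2)[of "nt c"] ghz_ntself[OF assms(1)] cd by simp
    from 1 have "w = 1" by (simp add: field_simps)
    with 2 show ?thesis using cd by simp
  next
    assume cd: "c = nt d"
    have 1: "1 / complex_of_real (sqrt 2) = w * (complex_of_real \<tau> / complex_of_real (sqrt 2))"
      using w(2)[of c] ghz_self[OF assms(1)] ghz_ntself[OF dne] cd by simp
    have 2: "complex_of_real \<sigma> / complex_of_real (sqrt 2) = w * (1 / complex_of_real (sqrt 2))"
      using w(2)[of "nt c"] ghz_ntself[OF assms(1)] ghz_self[OF dne] cd by simp
    from 2 have "w = complex_of_real \<sigma>" by (simp add: field_simps)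
    with 1 assms(2,3) have "\<tau> = \<sigma>" by (auto simp: field_simps)
    then show ?thesis using cd by simp
  qed
next
  assume h: "(d = c \<or> d = nt c) \<and> \<tau> = \<sigma>"
  show "same_state (ghz_state c \<sigma>) (ghz_state d \<tau>)"
  proof (cases "d = c")
    case True
    then have "d = c" "\<tau> = \<sigma>" using h by auto
    then show ?thesis unfolding same_state_def by (intro exI[of _ 1]) simp
  next
    case False
    then have d: "d = nt c" "\<tau> = \<sigma>" using h by auto
    show ?thesis unfolding same_state_def
    proof (intro exI[of _ "complex_of_real \<sigma>"] conjI allI)
      show "cmod (complex_of_real \<sigma>) = 1" using assms(2) by auto
      fix xs
      show "ghz_state c \<sigma> xs = complex_of_real \<sigma> * ghz_state d \<tau> xs"
        unfolding d ghz_state_def nt_nt by (rule swap_alg[OF assms(2)])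
    qed
  qed
qed


lemma proj_ghz:
  assumes "length c = k" "c \<noteq> []"
  shows "partial_proj k merge (ghz_state c \<sigma>) psi ys =
    (psi (merge c ys) + complex_of_real \<sigma> * psi (merge (nt c) ys)) / complex_of_real (sqrt 2)"
proof -
  let ?S = "{xs::bool list. length xs = k}"
  have fin: "finite ?S" using finite_lists_length_eq[of "UNIV::bool set"] by simp
  have cne: "c \<noteq> nt c" using assms(2) by (cases c) auto
  have pt: "cnj (ghz_state c \<sigma> xs) * psi (merge xs ys) =
     (if xs = c then psi (merge c ys) / complex_of_real (sqrt 2) else 0) +
     (if xs = nt c then complex_of_real \<sigma> * psi (merge (nt c) ys) / complex_of_real (sqrt 2) else 0)" for xs
  proof (cases "xs = c")
    case True then show ?thesis using cne assms(2) by (simp add: ghz_state_def)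
  next
    case False
    show ?thesis
    proof (cases "xs = nt c")
      case True then show ?thesis using cne assms(2) by (simp add: ghz_state_def)
    next
      case False2: False
      then show ?thesis using False by (simp add: ghz_state_def ket_def)
    qed
  qed
  have "partial_proj k merge (ghz_state c \<sigma>) psi ys =
     (\<Sum>xs\<in>?S. (if xs = c then psi (merge c ys) / complex_of_real (sqrt 2) else 0) +
     (if xs = nt c then complex_of_real \<sigma> * psi (merge (nt c) ys) / complex_of_real (sqrt 2) else 0))"
    unfolding partial_proj_def using pt by simp
  also have "\<dots> = psi (merge c ys) / complex_of_real (sqrt 2) +
      complex_of_real \<sigma> * psi (merge (nt c) ys) / complex_of_real (sqrt 2)"
    using fin assms(1) by (simp add: sum.distrib sum.delta)
  finally show ?thesis by (simp add: add_divide_distrib)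
qed

lemma vnorm_ghz:
  assumes "length d = n" "d \<noteq> []" "\<tau> \<in> {1,-1}"
  shows "vnorm n (\<lambda>ys. k * ghz_state d \<tau> ys) = cmod k"
proof -
  let ?S = "{xs::bool list. length xs = n}"
  have fin: "finite ?S" using finite_lists_length_eq[of "UNIV::bool set"] by simp
  have dne: "d \<noteq> nt d" using assms(2) by (cases d) auto
  have h: "(cmod (x / complex_of_real (sqrt 2)))\<^sup>2 = (cmod x)^2 / 2" for x
    by (simp add: norm_divide power_divide)
  have pt: "(cmod (k * ghz_state d \<tau> xs))\<^sup>2 =
     (if xs = d then (cmod k)^2/2 else 0) + (if xs = nt d then (cmod k)^2/2 else 0)" for xs
  proof (cases "xs = d")
    case True then show ?thesis using dne assms(2) h[of k] by (simp add: ghz_state_def)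
  next
    case False
    show ?thesis
    proof (cases "xs = nt d")
      case True
      have "cmod (k * complex_of_real \<tau>) = cmod k" using assms(3) by (auto simp: norm_mult)
      then show ?thesis using True False dne assms(2) h[of "k * complex_of_real \<tau>"] by (simp add: ghz_state_def)
    next
      case False2: False
      then show ?thesis using False by (simp add: ghz_state_def ket_def)
    qed
  qed
  have "(\<Sum>xs\<in>?S. (cmod (k * ghz_state d \<tau> xs))\<^sup>2) = (cmod k)^2"
    unfolding pt using fin assms(1) by (simp add: sum.distrib sum.delta)
  then show ?thesis unfolding vnorm_def by simp
qed

lemma final:
  assumes "P = (\<lambda>ys. k * ghz_state d \<tau> ys)" "k \<noteq> 0" "length d = n" "d \<noteq> []" "c \<noteq> []"
    "\<sigma> \<in> {1,-1}" "\<tau> \<in> {1,-1}"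
  shows "same_state (ghz_state c \<sigma>) (normalize_state n P) = ((d = c \<or> d = nt c) \<and> \<tau> = \<sigma>)"
proof -
  have N: "normalize_state n P = (\<lambda>ys. (k / complex_of_real (cmod k)) * ghz_state d \<tau> ys)"
    unfolding normalize_state_def assms(1) vnorm_ghz[OF assms(3,4,7)] by simp
  have U: "cmod (k / complex_of_real (cmod k)) = 1" using assms(2) by (simp add: norm_divide)
  show ?thesis unfolding N same_scale[OF U] by (rule same_ghz[OF assms(5,6,7)])
qed


lemma tensor_app: "length u = n \<Longrightarrow> tensor n f g (u@v) = f u * g v"
  by (simp add: tensor_def)

lemma tensor_len:
  assumes "length zs \<noteq> length a + length b"
  shows "tensor (length a) (ghz_state a s1) (ghz_state b s2) zs = 0"
proof (cases "length zs < length a")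
  case True then show ?thesis by (simp add: tensor_def ghz_len)
next
  case False then show ?thesis using assms by (simp add: tensor_def ghz_len)
qed

lemma len_m13[simp]: "length (merge_13 m xs ys) = length xs + length ys"
  by (simp add: merge_13_def)
lemma len_m14[simp]: "length (merge_14 m xs ys) = length xs + length ys"
  by (simp add: merge_14_def)

lemma sign_prod: "(s1::real) \<in> {1,-1} \<Longrightarrow> s2 \<in> {1,-1} \<Longrightarrow> \<sigma> \<in> {1,-1} \<Longrightarrow> \<sigma>*s1*s2 \<in> {1,-1}"
  by auto
lemma sign_eq: "(s1::real) \<in> {1,-1} \<Longrightarrow> s2 \<in> {1,-1} \<Longrightarrow> \<sigma> \<in> {1,-1} \<Longrightarrow> (\<sigma>*s1*s2 = \<sigma>) = (s1 = s2)"
  by auto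

lemma case13:
  fixes a1 a2 b1 b2 c1 c2 :: "bool list"
  assumes l: "length a1 = m1" "length a2 = m1" "length b1 = m2" "length b2 = m2"
    "length c1 = m1" "length c2 = m2" "m1 \<ge> 1" "m2 \<ge> 1"
    and h: "hd a1 = False" "hd c1 = False"
    and sg: "s1 \<in> {1,-1}" "s2 \<in> {1,-1}" "\<sigma> \<in> {1,-1}"
    and Pdef: "P = partial_proj (m1+m2) (merge_13 m1) (ghz_state (c1@c2) \<sigma>)
       (tensor (2*m1) (ghz_state (a1@a2) s1) (ghz_state (b1@b2) s2))"
    and nz: "P \<noteq> (\<lambda>_. 0)"
  shows "same_state (ghz_state (c1@c2) \<sigma>) (normalize_state (m1+m2) P) \<longleftrightarrow>
     ((a1 = a2 \<and> b1 = b2 \<or> a1 = nt a2 \<and> b1 = nt b2) \<and> s1 = s2)"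
proof -
  let ?r = "complex_of_real (sqrt 2)"
  let ?psi = "tensor (2*m1) (ghz_state (a1@a2) s1) (ghz_state (b1@b2) s2)"
  have ne: "a1 \<noteq> []" "c1 \<noteq> []" "a2 \<noteq> []" "b1 \<noteq> []" "b2 \<noteq> []" "c2 \<noteq> []"
    using l by auto
  have cne: "c1 @ c2 \<noteq> []" using ne by simp
  have P1: "P ys = (?psi (merge_13 m1 (c1@c2) ys) + complex_of_real \<sigma> * ?psi (merge_13 m1 (nt c1 @ nt c2) ys)) / ?r" for ys
    unfolding Pdef using proj_ghz[of "c1@c2" "m1+m2", OF _ cne] l by simp
  have Pz: "P ys = 0" if "length ys \<noteq> m1 + m2" for ys
  proof -
    have "?psi zs = 0" if "length zs \<noteq> 2*m1 + 2*m2" for zs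
      using tensor_len[of zs "a1@a2" "b1@b2" s1 s2] that l by (simp add: mult_2)
    then show ?thesis unfolding P1 using that l by simp
  qed
  have Pf: "P (y1@y2) = ((ket a1 u1 * ket a2 y1 + complex_of_real s1 * (ket (nt a1) u1 * ket (nt a2) y1)) / ?r
       * ((ket b1 u2 * ket b2 y2 + complex_of_real s2 * (ket (nt b1) u2 * ket (nt b2) y2)) / ?r)
     + complex_of_real \<sigma> * ((ket a1 (nt u1) * ket a2 y1 + complex_of_real s1 * (ket (nt a1) (nt u1) * ket (nt a2) y1)) / ?r
       * ((ket b1 (nt u2) * ket b2 y2 + complex_of_real s2 * (ket (nt b1) (nt u2) * ket (nt b2) y2)) / ?r))) / ?r"
    if "length y1 = m1" "length y2 = m2" "u1 = c1" "u2 = c2" for y1 y2 u1 u2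
  proof -
    have m: "merge_13 m1 (v1@v2) (y1@y2) = (v1@y1)@(v2@y2)" if "length v1 = m1" for v1 v2
      using that \<open>length y1 = m1\<close> by (simp add: merge_13_def)
    have t: "?psi (merge_13 m1 (v1@v2) (y1@y2)) = ghz_state (a1@a2) s1 (v1@y1) * ghz_state (b1@b2) s2 (v2@y2)"
      if "length v1 = m1" for v1 v2
      unfolding m[OF that] using that \<open>length y1 = m1\<close> by (intro tensor_app) simp
    have g1: "ghz_state (a1@a2) s1 (v1@y1) = (ket a1 v1 * ket a2 y1 + complex_of_real s1 * (ket (nt a1) v1 * ket (nt a2) y1)) / ?r"
      if "length v1 = m1" for v1 using that l by (intro ghz_app) simp
    have g2: "ghz_state (b1@b2) s2 (v2@y2) = (ket b1 v2 * ket b2 y2 + complex_of_real s2 * (ket (nt b1) v2 * ket (nt b2) y2)) / ?r"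
      if "length v2 = m2" for v2 using that l by (intro ghz_app) simp
    have nc: "nt (c1@c2) = nt c1 @ nt c2" by simp
    show ?thesis unfolding P1 that(3,4) nc using l
      by (simp only: t g1 g2 length_map)
  qed
  have hdn: "hd (nt u) = (\<not> hd u)" if "u \<noteq> []" for u :: "bool list" using that by (cases u) auto
  have k1: "ket (nt a1) c1 = 0" using ne h hdn[of a1] by (intro ket_hd) auto
  have k2: "ket a1 (nt c1) = 0" using ne h hdn[of c1] by (intro ket_hd) auto
  have ex: "\<exists>y1 y2. length y1 = m1 \<and> length y2 = m2 \<and> P (y1@y2) \<noteq> 0"
  proof -
    obtain ys where ys: "P ys \<noteq> 0" using nz by auto
    then have "length ys = m1 + m2" using Pz by auto
    then show ?thesis using ys by (intro exI[of _ "take m1 ys"] exI[of _ "drop m1 ys"]) simp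
  qed
  have ca: "c1 = a1"
  proof (rule ccontr)
    assume "c1 \<noteq> a1"
    then have "ket a1 c1 = 0" by (auto simp: ket_def)
    then show False using ex Pf[OF _ _ refl refl] k1 k2 by auto
  qed
  have kb: "ket b1 c2 = 0 \<and> ket (nt b1) c2 = 0 \<and> ket b1 (nt c2) = 0" if "c2 \<noteq> b1" "c2 \<noteq> nt b1"
    using that by (auto simp: ket_def)
  have cb: "c2 = b1 \<or> c2 = nt b1"
  proof (rule ccontr)
    assume "\<not> (c2 = b1 \<or> c2 = nt b1)"
    then show False using ex Pf[OF _ _ refl refl] kb by auto
  qed
  have split: "\<exists>y1 y2. ys = y1 @ y2 \<and> length y1 = m1 \<and> length y2 = m2" if "length ys = m1 + m2" for ys :: "bool list"
    using that by (intro exI[of _ "take m1 ys"] exI[of _ "drop m1 ys"]) simp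
  have r2: "?r * ?r = 2" by (rule sq2)
  from cb show ?thesis
  proof
    assume cb1: "c2 = b1"
    have PP: "P = (\<lambda>ys. (1/2) * ghz_state (a2@b2) (\<sigma>*s1*s2) ys)"
    proof
      fix ys :: "bool list"
      show "P ys = (1/2) * ghz_state (a2@b2) (\<sigma>*s1*s2) ys"
      proof (cases "length ys = m1 + m2")
        case True
        then obtain y1 y2 where y: "ys = y1 @ y2" "length y1 = m1" "length y2 = m2" using split by blast
        have "P ys = (ket a2 y1 * ket b2 y2 + complex_of_real (\<sigma>*s1*s2) * (ket (nt a2) y1 * ket (nt b2) y2)) / (?r * ?r * ?r)"
          unfolding y(1) Pf[OF y(2,3) ca[symmetric] cb1[symmetric]] using ne k1 k2 ca
          by (simp add: field_simps)
        also have "\<dots> = (1/2) * ghz_state (a2@b2) (\<sigma>*s1*s2) ys"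
          unfolding y(1) using y l by (simp add: ghz_app r2 field_simps)
        finally show ?thesis .
      next
        case False
        then show ?thesis using Pz l by (simp add: ghz_len)
      qed
    qed
    have F: "same_state (ghz_state (c1@c2) \<sigma>) (normalize_state (m1+m2) P) =
      ((a2@b2 = c1@c2 \<or> a2@b2 = nt (c1@c2)) \<and> \<sigma>*s1*s2 = \<sigma>)"
      by (rule final[OF PP]) (use l ne sg cne in \<open>auto simp: sign_prod\<close>)
    have e1: "(a2@b2 = a1@b1) = (a1 = a2 \<and> b1 = b2)" using l by (auto simp: append_eq_append_conv)
    have e2: "(a2@b2 = nt a1 @ nt b1) = (a1 = nt a2 \<and> b1 = nt b2)" using l by (auto simp: append_eq_append_conv)
    show ?thesis using F e1 e2 sign_eq[OF sg] unfolding ca cb1 by simp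
  next
    assume cb1: "c2 = nt b1"
    have PP: "P = (\<lambda>ys. (complex_of_real s2/2) * ghz_state (a2 @ nt b2) (\<sigma>*s1*s2) ys)"
    proof
      fix ys :: "bool list"
      show "P ys = (complex_of_real s2/2) * ghz_state (a2 @ nt b2) (\<sigma>*s1*s2) ys"
      proof (cases "length ys = m1 + m2")
        case True
        then obtain y1 y2 where y: "ys = y1 @ y2" "length y1 = m1" "length y2 = m2" using split by blast
        have s22: "complex_of_real s2 * complex_of_real s2 = 1" using sg by auto
        have "P ys = complex_of_real s2 * (ket a2 y1 * ket (nt b2) y2 + complex_of_real (\<sigma>*s1*s2) * (ket (nt a2) y1 * ket b2 y2)) / (?r * ?r * ?r)"
          unfolding y(1) Pf[OF y(2,3) ca[symmetric] cb1[symmetric]] using ne k1 k2 ca s22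
          by (simp add: field_simps)
        also have "\<dots> = (complex_of_real s2/2) * ghz_state (a2 @ nt b2) (\<sigma>*s1*s2) ys"
          unfolding y(1) using y l by (simp add: ghz_app r2 field_simps)
        finally show ?thesis .
      next
        case False
        then show ?thesis using Pz l by (simp add: ghz_len)
      qed
    qed
    have F: "same_state (ghz_state (c1@c2) \<sigma>) (normalize_state (m1+m2) P) =
      ((a2 @ nt b2 = c1@c2 \<or> a2 @ nt b2 = nt (c1@c2)) \<and> \<sigma>*s1*s2 = \<sigma>)"
      by (rule final[OF PP]) (use l ne sg cne in \<open>auto simp: sign_prod\<close>)
    have e1: "(a2 @ nt b2 = a1 @ nt b1) = (a1 = a2 \<and> b1 = b2)" using l by (auto simp: append_eq_append_conv)
    have e2: "(a2 @ nt b2 = nt a1 @ b1) = (a1 = nt a2 \<and> b1 = nt b2)" using l by (auto simp: append_eq_append_conv)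
    show ?thesis using F e1 e2 sign_eq[OF sg] unfolding ca cb1 by simp
  qed
qed

lemma case14:
  fixes a1 a2 b1 b2 c1 c2 :: "bool list"
  assumes l: "length a1 = m1" "length a2 = m1" "length b1 = m2" "length b2 = m2"
    "length c1 = m1" "length c2 = m2" "m1 \<ge> 1" "m2 \<ge> 1"
    and h: "hd a1 = False" "hd c1 = False"
    and sg: "s1 \<in> {1,-1}" "s2 \<in> {1,-1}" "\<sigma> \<in> {1,-1}"
    and Pdef: "P = partial_proj (m1+m2) (merge_14 m1) (ghz_state (c1@c2) \<sigma>)
       (tensor (2*m1) (ghz_state (a1@a2) s1) (ghz_state (b1@b2) s2))"
    and nz: "P \<noteq> (\<lambda>_. 0)"
  shows "same_state (ghz_state (c1@c2) \<sigma>) (normalize_state (m1+m2) P) \<longleftrightarrow>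
     ((a1 = a2 \<and> b1 = b2 \<or> a1 = nt a2 \<and> b1 = nt b2) \<and> s1 = s2)"
proof -
  let ?r = "complex_of_real (sqrt 2)"
  let ?psi = "tensor (2*m1) (ghz_state (a1@a2) s1) (ghz_state (b1@b2) s2)"
  have ne: "a1 \<noteq> []" "c1 \<noteq> []" "a2 \<noteq> []" "b1 \<noteq> []" "b2 \<noteq> []" "c2 \<noteq> []"
    using l by auto
  have cne: "c1 @ c2 \<noteq> []" using ne by simp
  have P1: "P ys = (?psi (merge_14 m1 (c1@c2) ys) + complex_of_real \<sigma> * ?psi (merge_14 m1 (nt c1 @ nt c2) ys)) / ?r" for ys
    unfolding Pdef using proj_ghz[of "c1@c2" "m1+m2", OF _ cne] l by simp
  have Pz: "P ys = 0" if "length ys \<noteq> m1 + m2" for ys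
  proof -
    have "?psi zs = 0" if "length zs \<noteq> 2*m1 + 2*m2" for zs
      using tensor_len[of zs "a1@a2" "b1@b2" s1 s2] that l by (simp add: mult_2)
    then show ?thesis unfolding P1 using that l by simp
  qed
  have Pf: "P (y1@y2) = ((ket a1 u1 * ket a2 y1 + complex_of_real s1 * (ket (nt a1) u1 * ket (nt a2) y1)) / ?r
       * ((ket b1 y2 * ket b2 u2 + complex_of_real s2 * (ket (nt b1) y2 * ket (nt b2) u2)) / ?r)
     + complex_of_real \<sigma> * ((ket a1 (nt u1) * ket a2 y1 + complex_of_real s1 * (ket (nt a1) (nt u1) * ket (nt a2) y1)) / ?r
       * ((ket b1 y2 * ket b2 (nt u2) + complex_of_real s2 * (ket (nt b1) y2 * ket (nt b2) (nt u2))) / ?r))) / ?r"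
    if "length y1 = m1" "length y2 = m2" "u1 = c1" "u2 = c2" for y1 y2 u1 u2
  proof -
    have m: "merge_14 m1 (v1@v2) (y1@y2) = (v1@y1)@(y2@v2)" if "length v1 = m1" for v1 v2
      using that \<open>length y1 = m1\<close> by (simp add: merge_14_def)
    have t: "?psi (merge_14 m1 (v1@v2) (y1@y2)) = ghz_state (a1@a2) s1 (v1@y1) * ghz_state (b1@b2) s2 (y2@v2)"
      if "length v1 = m1" for v1 v2
      unfolding m[OF that] using that \<open>length y1 = m1\<close> by (intro tensor_app) simp
    have g1: "ghz_state (a1@a2) s1 (v1@y1) = (ket a1 v1 * ket a2 y1 + complex_of_real s1 * (ket (nt a1) v1 * ket (nt a2) y1)) / ?r"
      if "length v1 = m1" for v1 using that l by (intro ghz_app) simp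
    have g2: "ghz_state (b1@b2) s2 (y2@v2) = (ket b1 y2 * ket b2 v2 + complex_of_real s2 * (ket (nt b1) y2 * ket (nt b2) v2)) / ?r"
      for v2 using \<open>length y2 = m2\<close> l by (intro ghz_app) simp
    have nc: "nt (c1@c2) = nt c1 @ nt c2" by simp
    show ?thesis unfolding P1 that(3,4) nc using l
      by (simp only: t g1 g2 length_map)
  qed
  have hdn: "hd (nt u) = (\<not> hd u)" if "u \<noteq> []" for u :: "bool list" using that by (cases u) auto
  have k1: "ket (nt a1) c1 = 0" using ne h hdn[of a1] by (intro ket_hd) auto
  have k2: "ket a1 (nt c1) = 0" using ne h hdn[of c1] by (intro ket_hd) auto
  have ex: "\<exists>y1 y2. length y1 = m1 \<and> length y2 = m2 \<and> P (y1@y2) \<noteq> 0"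
  proof -
    obtain ys where ys: "P ys \<noteq> 0" using nz by auto
    then have "length ys = m1 + m2" using Pz by auto
    then show ?thesis using ys by (intro exI[of _ "take m1 ys"] exI[of _ "drop m1 ys"]) simp
  qed
  have ca: "c1 = a1"
  proof (rule ccontr)
    assume "c1 \<noteq> a1"
    then have "ket a1 c1 = 0" by (auto simp: ket_def)
    then show False using ex Pf[OF _ _ refl refl] k1 k2 by auto
  qed
  have kb: "ket b2 c2 = 0 \<and> ket (nt b2) c2 = 0 \<and> ket b2 (nt c2) = 0" if "c2 \<noteq> b2" "c2 \<noteq> nt b2"
    using that by (auto simp: ket_def)
  have cb: "c2 = b2 \<or> c2 = nt b2"
  proof (rule ccontr)
    assume "\<not> (c2 = b2 \<or> c2 = nt b2)"
    then show False using ex Pf[OF _ _ refl refl] kb by auto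
  qed
  have split: "\<exists>y1 y2. ys = y1 @ y2 \<and> length y1 = m1 \<and> length y2 = m2" if "length ys = m1 + m2" for ys :: "bool list"
    using that by (intro exI[of _ "take m1 ys"] exI[of _ "drop m1 ys"]) simp
  have r2: "?r * ?r = 2" by (rule sq2)
  from cb show ?thesis
  proof
    assume cb1: "c2 = b2"
    have PP: "P = (\<lambda>ys. (1/2) * ghz_state (a2@b1) (\<sigma>*s1*s2) ys)"
    proof
      fix ys :: "bool list"
      show "P ys = (1/2) * ghz_state (a2@b1) (\<sigma>*s1*s2) ys"
      proof (cases "length ys = m1 + m2")
        case True
        then obtain y1 y2 where y: "ys = y1 @ y2" "length y1 = m1" "length y2 = m2" using split by blast
        have "P ys = (ket a2 y1 * ket b1 y2 + complex_of_real (\<sigma>*s1*s2) * (ket (nt a2) y1 * ket (nt b1) y2)) / (?r * ?r * ?r)"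
          unfolding y(1) Pf[OF y(2,3) ca[symmetric] cb1[symmetric]] using ne k1 k2 ca
          by (simp add: field_simps)
        also have "\<dots> = (1/2) * ghz_state (a2@b1) (\<sigma>*s1*s2) ys"
          unfolding y(1) using y l by (simp add: ghz_app r2 field_simps)
        finally show ?thesis .
      next
        case False
        then show ?thesis using Pz l by (simp add: ghz_len)
      qed
    qed
    have F: "same_state (ghz_state (c1@c2) \<sigma>) (normalize_state (m1+m2) P) =
      ((a2@b1 = c1@c2 \<or> a2@b1 = nt (c1@c2)) \<and> \<sigma>*s1*s2 = \<sigma>)"
      by (rule final[OF PP]) (use l ne sg cne in \<open>auto simp: sign_prod\<close>)
    have e1: "(a2@b1 = a1@b2) = (a1 = a2 \<and> b1 = b2)" using l by (auto simp: append_eq_append_conv)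
    have e2: "(a2@b1 = nt a1 @ nt b2) = (a1 = nt a2 \<and> b1 = nt b2)" using l by (auto simp: append_eq_append_conv)
    show ?thesis using F e1 e2 sign_eq[OF sg] unfolding ca cb1 by simp
  next
    assume cb1: "c2 = nt b2"
    have PP: "P = (\<lambda>ys. (complex_of_real s2/2) * ghz_state (a2 @ nt b1) (\<sigma>*s1*s2) ys)"
    proof
      fix ys :: "bool list"
      show "P ys = (complex_of_real s2/2) * ghz_state (a2 @ nt b1) (\<sigma>*s1*s2) ys"
      proof (cases "length ys = m1 + m2")
        case True
        then obtain y1 y2 where y: "ys = y1 @ y2" "length y1 = m1" "length y2 = m2" using split by blast
        have s22: "complex_of_real s2 * complex_of_real s2 = 1" using sg by auto
        have "P ys = complex_of_real s2 * (ket a2 y1 * ket (nt b1) y2 + complex_of_real (\<sigma>*s1*s2) * (ket (nt a2) y1 * ket b1 y2)) / (?r * ?r * ?r)"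
          unfolding y(1) Pf[OF y(2,3) ca[symmetric] cb1[symmetric]] using ne k1 k2 ca s22
          by (simp add: field_simps)
        also have "\<dots> = (complex_of_real s2/2) * ghz_state (a2 @ nt b1) (\<sigma>*s1*s2) ys"
          unfolding y(1) using y l by (simp add: ghz_app r2 field_simps)
        finally show ?thesis .
      next
        case False
        then show ?thesis using Pz l by (simp add: ghz_len)
      qed
    qed
    have F: "same_state (ghz_state (c1@c2) \<sigma>) (normalize_state (m1+m2) P) =
      ((a2 @ nt b1 = c1@c2 \<or> a2 @ nt b1 = nt (c1@c2)) \<and> \<sigma>*s1*s2 = \<sigma>)"
      by (rule final[OF PP]) (use l ne sg cne in \<open>auto simp: sign_prod\<close>)
    have e1: "(a2 @ nt b1 = a1 @ nt b2) = (a1 = a2 \<and> b1 = b2)" using l by (auto simp: append_eq_append_conv)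
    have e2: "(a2 @ nt b1 = nt a1 @ b2) = (a1 = nt a2 \<and> b1 = nt b2)" using l by (auto simp: append_eq_append_conv)
    show ?thesis using F e1 e2 sign_eq[OF sg] unfolding ca cb1 by simp
  qed
qed


theorem theorem1:
  fixes m1 m2 :: nat and s1 s2 :: real and x1 x2 :: "bool list"
    and merge :: "bool list \<Rightarrow> bool list \<Rightarrow> bool list" and phi :: qstate
  assumes "m1 \<ge> 1" and "m2 \<ge> 1"
    and "s1 \<in> {1, -1}" and "s2 \<in> {1, -1}"
    and "length x1 = 2 * m1 - 1" and "length x2 = 2 * m2 - 1"
    and "merge = merge_13 m1 \<or> merge = merge_14 m1"
    and "phi \<in> ghz_basis (m1 + m2)"
    and "partial_proj (m1 + m2) merge phi
           (tensor (2 * m1) (ghz_state (False # x1) s1) (ghz_state (False # x2) s2)) \<noteq> (\<lambda>_. 0)"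
  shows "same_state phi
           (normalize_state (m1 + m2) (partial_proj (m1 + m2) merge phi
              (tensor (2 * m1) (ghz_state (False # x1) s1) (ghz_state (False # x2) s2))))
         \<longleftrightarrow>
         (((take m1 (False # x1) = drop m1 (False # x1)
             \<and> take m2 (False # x2) = drop m2 (False # x2))
          \<or> (take m1 (False # x1) = map Not (drop m1 (False # x1))
             \<and> take m2 (False # x2) = map Not (drop m2 (False # x2))))
          \<and> s1 = s2)"
proof -
  note as = assms
  obtain bs \<sigma> where phi: "phi = ghz_state (False # bs) \<sigma>" "length bs = m1 + m2 - 1" "\<sigma> \<in> {1,-1}"
    using assms(8) unfolding ghz_basis_def by blast
  let ?a = "False # x1" and ?b = "False # x2" and ?c = "False # bs"
  let ?P = "partial_proj (m1 + m2) merge phi (tensor (2 * m1) (ghz_state ?a s1) (ghz_state ?b s2))"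
  have la: "length ?a = 2*m1" "length ?b = 2*m2" "length ?c = m1 + m2" using assms(1,2,5,6) phi(2) by auto
  have hd: "hd (take m1 ?a) = False" "hd (take m1 ?c) = False" using assms(1) by (cases m1; simp)+
  have L: "length (take m1 ?a) = m1" "length (drop m1 ?a) = m1" "length (take m2 ?b) = m2"
    "length (drop m2 ?b) = m2" "length (take m1 ?c) = m1" "length (drop m1 ?c) = m2"
    using la by auto
  from assms(7) show ?thesis
  proof
    assume mg: "merge = merge_13 m1"
    show ?thesis
      using case13[where ?a1.0 = "take m1 ?a" and ?a2.0 = "drop m1 ?a" and ?b1.0 = "take m2 ?b" and ?b2.0 = "drop m2 ?b"
        and ?c1.0 = "take m1 ?c" and ?c2.0 = "drop m1 ?c" and ?m1.0 = m1 and ?m2.0 = m2 and ?s1.0 = s1 and ?s2.0 = s2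
        and \<sigma> = \<sigma> and P = ?P, OF L assms(1,2) hd assms(3,4) phi(3)] assms(9)
      unfolding append_take_drop_id mg phi(1) by simp
  next
    assume mg: "merge = merge_14 m1"
    show ?thesis
      using case14[where ?a1.0 = "take m1 ?a" and ?a2.0 = "drop m1 ?a" and ?b1.0 = "take m2 ?b" and ?b2.0 = "drop m2 ?b"
        and ?c1.0 = "take m1 ?c" and ?c2.0 = "drop m1 ?c" and ?m1.0 = m1 and ?m2.0 = m2 and ?s1.0 = s1 and ?s2.0 = s2
        and \<sigma> = \<sigma> and P = ?P, OF L assms(1,2) hd assms(3,4) phi(3)] assms(9)
      unfolding append_take_drop_id mg phi(1) by simp
  qed
qed

end
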